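(* Let $\mathcal{A}=\{e_1,\dots,e_d\}$ be the standard basis of $\mathbb{R}^d$, $\pi_{\mathrm{off}}\in\Delta(\mathcal{A})$, $\mathcal{A}_l\subseteq\mathcal{A}$ nonempty with $\pi_{\mathrm{off}}(a)>0$ for all $a\in\mathcal{A}_l$, and $\alpha\in[0,1)$. Let $0<\pi_{(1)}<\pi_{(2)}<\dots<\pi_{(r)}\le1$ be the distinct values of $\pi_{\mathrm{off}}(a)$, $a\in\mathcal{A}_l$, the value $\pi_{(i)}$ being taken $m_i$ times. Define $\beta_1=1$, $\beta_i=\big(1+\sum_{j=1}^{i-1}m_j(\pi_{(i)}-\pi_{(j)})\big)^{-1}$ for $1<i\le r$, and $\beta_{r+1}=0$. Then there is $i\in[r]$ with $\beta_{i+1}\le\alpha<\beta_i$, and for this $i$, with $\pi^*\in\arg\max_{\pi\in\Delta(\mathcal{A}_l)}\log\det\big(V_{(1-\alpha)\pi+\alpha\pi_{\mathrm{off}}}\big)$ and $\tilde\pi^\star=(1-\alpha)\pi^*+\alpha\pi_{\mathrm{off}}$, $$g_{\mathcal{A}_l}(\tilde\pi^\star)=\frac{\sum_{j=1}^im_j}{\alpha\sum_{j=1}^im_j\pi_{(j)}+1-\alpha}.$$ Further, the support of $\pi^*$ is $S_i=\{a\in\mathcal{A}_l:\pi_{\mathrm{off}}(a)\le\pi_{(i)}\}$ and for $a\in S_i$, $$\pi^*(a)=\frac1{|S_i|}+\frac{\alpha}{1-\alpha}\Big[\frac{\pi_{\mathrm{off}}(S_i)}{|S_i|}-\pi_{\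mathrm{off}}(a)\Big].$$
   Context: $\Delta(\mathcal{B})$ is the probability simplex over $\mathcal{B}$; $V_\pi=\sum_a\pi(a)aa^\top$; $g_{\mathcal{B}}(\pi)=\max_{a\in\mathcal{B}}a^\top V_\pi^{-1}a$; $\pi_{\mathrm{off}}(S)=\sum_{a\in S}\pi_{\mathrm{off}}(a)$. *)

theory Defs
  imports "HOL-Analysis.Analysis"
begin

text \<open>Vectors of R^d are \<open>real^'n\<close> (d = CARD('n)).  Distributions over a finite
set B of vectors are functions \<open>real^'n \<Rightarrow> real\<close> vanishing outside B.\<close>

definition outer :: "real^'n \<Rightarrow> real^'n^'n" where
  "outer a = (\<chi> i j. a$i * a$j)"

definition std_basis :: "(real^'n) set" where
  "std_basis = range (\<lambda>k. axis k 1)"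

definition prob_simplex :: "(real^'n) set \<Rightarrow> (real^'n \<Rightarrow> real) set" where
  "prob_simplex B = {q. (\<forall>a. 0 \<le> q a) \<and> (\<forall>a. a \<notin> B \<longrightarrow> q a = 0) \<and> sum q B = 1}"

definition design_matrix :: "(real^'n) set \<Rightarrow> (real^'n \<Rightarrow> real) \<Rightarrow> real^'n^'n" where
  "design_matrix B q = (\<Sum>a\<in>B. q a *\<^sub>R outer a)"

text \<open>This is how V is
  restricted to span A_l (V may be singular on coordinates outside A_l).\<close>
definition proj_span :: "(real^'n) set \<Rightarrow> real^'n^'n" where
  "proj_span B = (\<Sum>b\<in>B. outer b)"

definition compress :: "(real^'n) set \<Rightarrow> real^'n^'n \<Rightarrow> real^'n^'n" where
  "compress B M = proj_span B ** M ** proj_span B + (mat 1 - proj_span B)"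

definition logdet_on :: "(real^'n) set \<Rightarrow> real^'n^'n \<Rightarrow> ereal" where
  "logdet_on B M = (if det (compress B M) > 0 then ereal (ln (det (compress B M))) else -\<infinity>)"

definition g_on :: "(real^'n) set \<Rightarrow> real^'n^'n \<Rightarrow> real" where
  "g_on B M = Max ((\<lambda>a. a \<bullet> (matrix_inv (compress B M) *v a)) ` B)"

definition mix :: "real \<Rightarrow> (real^'n \<Rightarrow> real) \<Rightarrow> (real^'n \<Rightarrow> real) \<Rightarrow> (real^'n \<Rightarrow> real)" where
  "mix \<alpha> q p = (\<lambda>a. (1 - \<alpha>) * q a + \<alpha> * p a)"

definition nvals :: "(real^'n \<Rightarrow> real) \<Rightarrow> (real^'n) set \<Rightarrow> nat" where
  "nvals p Al = card (p ` Al)"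

definition ord_val :: "(real^'n \<Rightarrow> real) \<Rightarrow> (real^'n) set \<Rightarrow> nat \<Rightarrow> real" where
  "ord_val p Al i = sorted_list_of_set (p ` Al) ! (i - 1)"

definition mult :: "(real^'n \<Rightarrow> real) \<Rightarrow> (real^'n) set \<Rightarrow> nat \<Rightarrow> nat" where
  "mult p Al i = card {a\<in>Al. p a = ord_val p Al i}"

definition beta :: "(real^'n \<Rightarrow> real) \<Rightarrow> (real^'n) set \<Rightarrow> nat \<Rightarrow> real" where
  "beta p Al i =
     (if i = 1 then 1
      else if i = nvals p Al + 1 then 0
      else inverse (1 + (\<Sum>j=1..i-1. real (mult p Al j) * (ord_val p Al i - ord_val p Al j))))"

end

theory Submission imports Defs begin

definition diagm :: "('n::finite \<Rightarrow> real) \<Rightarrow> real^'n^'n" where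
  "diagm d = (\<chi> i j. if i = j then d i else 0)"

lemma diagm_mult_aux:
  fixes i j :: "'n::finite"
  shows "(\<Sum>k\<in>UNIV. (if i = k then d i else 0) * (if k = j then e k else (0::real))) = (if i = j then d i * e i else 0)"
proof -
  have "(\<Sum>k\<in>UNIV. (if i = k then d i else 0) * (if k = j then e k else (0::real)))
      = (\<Sum>k\<in>UNIV. if k = i then d i * (if i = j then e i else 0) else 0)"
    by (rule sum.cong) auto
  also have "\<dots> = d i * (if i = j then e i else 0)" by (subst sum.delta) auto
  finally show ?thesis by simp
qed

lemma diagm_mult: "diagm d ** diagm e = diagm (\<lambda>i. d i * e i)"
  unfolding diagm_def matrix_matrix_mult_def vec_eq_iff
  by (simp only: vec_lambda_beta diagm_mult_aux) simp

lemma diagm_add: "diagm d + diagm e = diagm (\<lambda>i. d i + e i)"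
  by (simp add: diagm_def vec_eq_iff)

lemma diagm_diff: "diagm d - diagm e = diagm (\<lambda>i. d i - e i)"
  by (simp add: diagm_def vec_eq_iff)

lemma mat1_diagm: "mat 1 = diagm (\<lambda>i. 1)"
  by (simp add: diagm_def mat_def vec_eq_iff)

lemma det_diagm: "det (diagm d) = prod d UNIV"
  by (subst det_diagonal) (auto simp: diagm_def)

lemma matrix_inv_eq:
  fixes A B :: "real^'n^'n"
  assumes "A ** B = mat 1" "B ** A = mat 1"
  shows "matrix_inv A = B"
proof -
  have ex: "\<exists>A'. A ** A' = mat 1 \<and> A' ** A = mat 1" using assms by blast
  let ?C = "matrix_inv A"
  have C: "A ** ?C = mat 1 \<and> ?C ** A = mat 1"
    unfolding matrix_inv_def by (rule someI_ex[OF ex])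
  have "?C = ?C ** (A ** B)" using assms by simp
  also have "\<dots> = (?C ** A) ** B" by (simp add: matrix_mul_assoc)
  also have "\<dots> = B" using C by simp
  finally show ?thesis .
qed

lemma matrix_inv_diagm:
  assumes "\<And>i. d i \<noteq> 0"
  shows "matrix_inv (diagm d) = diagm (\<lambda>i. inverse (d i))"
proof (rule matrix_inv_eq)
  have "(\<lambda>i. d i * inverse (d i)) = (\<lambda>i. 1)" "(\<lambda>i. inverse (d i) * d i) = (\<lambda>i. 1)"
    using assms by auto
  then show "diagm d ** diagm (\<lambda>i. inverse (d i)) = mat 1" "diagm (\<lambda>i. inverse (d i)) ** diagm d = mat 1"
    unfolding diagm_mult mat1_diagm by auto
qed

lemma diagm_mulv: "diagm d *v x = (\<chi> i. d i * x $ i)"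
proof -
  have "\<And>i. (\<Sum>j\<in>UNIV. (if i = j then d i else 0) * x $ j) = d i * x $ i"
  proof -
    fix i
    have "(\<Sum>j\<in>UNIV. (if i = j then d i else 0) * x $ j) = (\<Sum>j\<in>UNIV. if j = i then d i * x $ i else 0)"
      by (rule sum.cong) auto
    also have "\<dots> = d i * x $ i" by (subst sum.delta) auto
    finally show "(\<Sum>j\<in>UNIV. (if i = j then d i else 0) * x $ j) = d i * x $ i" .
  qed
  then show ?thesis unfolding diagm_def matrix_vector_mult_def vec_eq_iff
    by (simp only: vec_lambda_beta) simp
qed

lemma outer_axis: "outer (axis k (1::real)) = diagm (\<lambda>i. if i = k then 1 else 0)"
  by (simp add: outer_def diagm_def axis_def vec_eq_iff)

lemma scale_diagm: "c *\<^sub>R diagm d = diagm (\<lambda>i. c * d i)"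
  by (simp add: diagm_def vec_eq_iff)

lemma zero_diagm: "diagm (\<lambda>i. 0) = 0"
  by (simp add: diagm_def vec_eq_iff)

lemma sum_diagm: "finite K \<Longrightarrow> (\<Sum>k\<in>K. diagm (d k)) = diagm (\<lambda>i. \<Sum>k\<in>K. d k i)"
proof (induction K rule: finite_induct)
  case empty
  then show ?case by (simp add: zero_diagm)
next
  case (insert x F)
  then show ?case by (simp add: diagm_add)
qed

lemma sum_outer:
  assumes "B \<subseteq> std_basis"
  shows "(\<Sum>b\<in>B. f b *\<^sub>R outer b) = diagm (\<lambda>i. if axis i 1 \<in> B then f (axis i 1) else 0)"
proof -
  define K where "K = {k. axis k (1::real) \<in> B}"
  have BK: "B = (\<lambda>k. axis k 1) ` K" using assms unfolding K_def std_basis_def by auto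
  have inj: "inj_on (\<lambda>k. axis k (1::real)) K" by (auto simp: inj_on_def axis_eq_axis)
  have "(\<Sum>b\<in>B. f b *\<^sub>R outer b) = (\<Sum>k\<in>K. f (axis k 1) *\<^sub>R outer (axis k 1))"
    unfolding BK by (simp add: sum.reindex[OF inj])
  also have "\<dots> = (\<Sum>k\<in>K. diagm (\<lambda>i. f (axis k 1) * (if i = k then 1 else 0)))"
    by (simp only: outer_axis scale_diagm)
  also have "\<dots> = diagm (\<lambda>i. \<Sum>k\<in>K. f (axis k 1) * (if i = k then 1 else 0))"
    by (rule sum_diagm) simp
  also have "(\<lambda>i. \<Sum>k\<in>K. f (axis k 1) * (if i = k then 1 else 0)) = (\<lambda>i. if axis i 1 \<in> B then f (axis i 1) else 0)"
  proof
    fix i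
    have "(\<Sum>k\<in>K. f (axis k 1) * (if i = k then 1 else 0)) = (\<Sum>k\<in>K. if i = k then f (axis k 1) else 0)"
      by (rule sum.cong) auto
    also have "\<dots> = (if i \<in> K then f (axis i 1) else 0)" by (simp add: sum.delta)
    finally show "(\<Sum>k\<in>K. f (axis k 1) * (if i = k then 1 else 0)) = (if axis i 1 \<in> B then f (axis i 1) else 0)"
      by (simp add: K_def)
  qed
  finally show ?thesis .
qed

lemma design_diagm: "design_matrix std_basis f = diagm (\<lambda>i. f (axis i 1))"
  unfolding design_matrix_def by (subst sum_outer) (auto simp: std_basis_def)

lemma proj_diagm: "B \<subseteq> std_basis \<Longrightarrow> proj_span B = diagm (\<lambda>i. if axis i 1 \<in> B then 1 else 0)"
  unfolding proj_span_def using sum_outer[of B "\<lambda>_. 1"] by simp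

lemma compress_diagm:
  assumes "B \<subseteq> std_basis"
  shows "compress B (design_matrix std_basis f) = diagm (\<lambda>i. if axis i 1 \<in> B then f (axis i 1) else 1)"
  unfolding compress_def design_diagm proj_diagm[OF assms] mat1_diagm diagm_mult diagm_diff diagm_add
  by (rule arg_cong[where f=diagm]) auto


lemma nvals_len: "nvals p Al = length (sorted_list_of_set (p ` Al))"
  by (simp add: nvals_def)

lemma ov_mono:
  assumes "1 \<le> j" "j < k" "k \<le> nvals p Al"
  shows "ord_val p Al j < ord_val p Al k"
proof -
  have ss: "sorted_wrt (<) (sorted_list_of_set (p ` Al))" by (rule strict_sorted_list_of_set)
  have l: "k - 1 < length (sorted_list_of_set (p ` Al))" using assms nvals_len[of p Al] by simp
  have "sorted_list_of_set (p ` Al) ! (j - 1) < sorted_list_of_set (p ` Al) ! (k - 1)"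
    by (rule sorted_wrt_nth_less[OF ss _ l]) (use assms in simp)
  then show ?thesis unfolding ord_val_def .
qed

lemma ov_le:
  assumes "1 \<le> j" "j \<le> k" "k \<le> nvals p Al"
  shows "ord_val p Al j \<le> ord_val p Al k"
  using ov_mono[of j k p Al] assms by (cases "j = k") auto

lemma ov_in:
  assumes "finite Al" "1 \<le> j" "j \<le> nvals p Al"
  shows "ord_val p Al j \<in> p ` Al"
proof -
  have "sorted_list_of_set (p ` Al) ! (j - 1) \<in> set (sorted_list_of_set (p ` Al))"
    using assms nvals_len[of p Al] by (intro nth_mem) auto
  then show ?thesis using assms(1) unfolding ord_val_def by simp
qed

lemma val_idx:
  assumes "finite Al" "a \<in> Al"
  shows "\<exists>k\<in>{1..nvals p Al}. p a = ord_val p Al k"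
proof -
  have "p a \<in> set (sorted_list_of_set (p ` Al))" using assms by simp
  then obtain i where i: "i < length (sorted_list_of_set (p ` Al))" "p a = sorted_list_of_set (p ` Al) ! i"
    by (metis in_set_conv_nth)
  show ?thesis
    by (rule bexI[of _ "Suc i"]) (use i nvals_len[of p Al] in \<open>auto simp: ord_val_def\<close>)
qed

lemma S_union:
  assumes fin: "finite Al" and i: "1 \<le> i" "i \<le> nvals p Al"
  shows "{a\<in>Al. p a \<le> ord_val p Al i} = (\<Union>j\<in>{1..i}. {a\<in>Al. p a = ord_val p Al j})"
proof
  show "{a\<in>Al. p a \<le> ord_val p Al i} \<subseteq> (\<Union>j\<in>{1..i}. {a\<in>Al. p a = ord_val p Al j})"
  proof
    fix a assume a: "a \<in> {a\<in>Al. p a \<le> ord_val p Al i}"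
    then obtain k where k: "k \<in> {1..nvals p Al}" "p a = ord_val p Al k" using val_idx[OF fin] by blast
    have "k \<le> i"
    proof (rule ccontr)
      assume "\<not> k \<le> i"
      then have "ord_val p Al i < ord_val p Al k" using ov_mono[of i k p Al] i k by auto
      then show False using a k by auto
    qed
    then show "a \<in> (\<Union>j\<in>{1..i}. {a\<in>Al. p a = ord_val p Al j})" using a k by auto
  qed
  show "(\<Union>j\<in>{1..i}. {a\<in>Al. p a = ord_val p Al j}) \<subseteq> {a\<in>Al. p a \<le> ord_val p Al i}"
    using ov_le[of _ i p Al] i by auto
qed

lemma S_card_sum:
  assumes fin: "finite Al" and i: "1 \<le> i" "i \<le> nvals p Al"
  shows "card {a\<in>Al. p a \<le> ord_val p Al i} = (\<Sum>j=1..i. mult p Al j)"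
    and "sum p {a\<in>Al. p a \<le> ord_val p Al i} = (\<Sum>j=1..i. real (mult p Al j) * ord_val p Al j)"
proof -
  have disj: "\<forall>j\<in>{1..i}. \<forall>k\<in>{1..i}. j \<noteq> k \<longrightarrow>
      {a\<in>Al. p a = ord_val p Al j} \<inter> {a\<in>Al. p a = ord_val p Al k} = {}"
  proof (intro ballI impI)
    fix j k assume jk: "j \<in> {1..i}" "k \<in> {1..i}" "j \<noteq> k"
    then have "ord_val p Al j \<noteq> ord_val p Al k"
      using ov_mono[of j k p Al] ov_mono[of k j p Al] i by (cases "j < k") auto
    then show "{a\<in>Al. p a = ord_val p Al j} \<inter> {a\<in>Al. p a = ord_val p Al k} = {}" by auto
  qed
  have fins: "\<forall>j\<in>{1..i}. finite {a\<in>Al. p a = ord_val p Al j}" using fin by auto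
  show "card {a\<in>Al. p a \<le> ord_val p Al i} = (\<Sum>j=1..i. mult p Al j)"
    unfolding S_union[OF assms] mult_def by (rule card_UN_disjoint[OF _ fins disj]) simp
  have "sum p {a\<in>Al. p a \<le> ord_val p Al i} = (\<Sum>j=1..i. sum p {a\<in>Al. p a = ord_val p Al j})"
    unfolding S_union[OF assms] by (rule sum.UNION_disjoint[OF _ fins disj]) simp
  also have "\<dots> = (\<Sum>j=1..i. real (mult p Al j) * ord_val p Al j)"
  proof (rule sum.cong[OF refl])
    fix j
    have "sum p {a\<in>Al. p a = ord_val p Al j} = sum (\<lambda>_. ord_val p Al j) {a\<in>Al. p a = ord_val p Al j}"
      by (rule sum.cong) auto
    then show "sum p {a\<in>Al. p a = ord_val p Al j} = real (mult p Al j) * ord_val p Al j"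
      by (simp add: mult_def)
  qed
  finally show "sum p {a\<in>Al. p a \<le> ord_val p Al i} = (\<Sum>j=1..i. real (mult p Al j) * ord_val p Al j)" .
qed

lemma beta_lt:
  assumes i: "1 \<le> i" "i \<le> nvals p Al" and a: "0 \<le> \<alpha>" "\<alpha> < beta p Al i"
  shows "\<alpha> * (1 + (\<Sum>j=1..i. real (mult p Al j) * (ord_val p Al i - ord_val p Al j))) < 1"
proof (cases "i = 1")
  case True
  then show ?thesis using a by (simp add: beta_def)
next
  case False
  define X where "X = 1 + (\<Sum>j=1..i-1. real (mult p Al j) * (ord_val p Al i - ord_val p Al j))"
  have "(\<Sum>j=1..i-1. real (mult p Al j) * (ord_val p Al i - ord_val p Al j)) \<ge> 0"
    using ov_le[of _ i p Al] i by (intro sum_nonneg mult_nonneg_nonneg) auto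
  then have X1: "X \<ge> 1" unfolding X_def by simp
  have "beta p Al i = inverse X" using False i unfolding beta_def X_def by auto
  then have "\<alpha> * X < inverse X * X" using a X1 by (intro mult_strict_right_mono) auto
  then have "\<alpha> * X < 1" using X1 by simp
  moreover have "{1..i} = insert i {1..i-1}" using i False by auto
  then have "(\<Sum>j=1..i. real (mult p Al j) * (ord_val p Al i - ord_val p Al j)) + 1 = X"
    unfolding X_def by (simp add: sum.insert_if)
  ultimately show ?thesis by (simp add: add.commute)
qed

lemma beta_ge:
  assumes i: "1 \<le> i" "i < nvals p Al" and a: "beta p Al (i + 1) \<le> \<alpha>"
  shows "1 \<le> \<alpha> * (1 + (\<Sum>j=1..i. real (mult p Al j) * (ord_val p Al (i + 1) - ord_val p Al j)))"
proof -
  define Y where "Y = 1 + (\<Sum>j=1..i. real (mult p Al j) * (ord_val p Al (i + 1) - ord_val p Al j))"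
  have "(\<Sum>j=1..i. real (mult p Al j) * (ord_val p Al (i + 1) - ord_val p Al j)) \<ge> 0"
    using ov_le[of _ "i + 1" p Al] i by (intro sum_nonneg mult_nonneg_nonneg) auto
  then have Y1: "Y \<ge> 1" unfolding Y_def by simp
  have "beta p Al (i + 1) = inverse Y" using i unfolding beta_def Y_def by auto
  then have "inverse Y \<le> \<alpha>" using a by simp
  then have "inverse Y * Y \<le> \<alpha> * Y" using Y1 by (intro mult_right_mono) auto
  then have "1 \<le> \<alpha> * Y" using Y1 by simp
  then show ?thesis unfolding Y_def .
qed


lemma ln_tangent:
  fixes x y :: real assumes "0 < x" "0 < y"
  shows "ln x \<le> ln y + (x - y) / y" and "x \<noteq> y \<Longrightarrow> ln x < ln y + (x - y) / y"
proof -
  have xy: "0 < x / y" using assms by simp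
  have e: "ln (x / y) = ln x - ln y" using assms by (simp add: ln_div)
  have d: "x / y - 1 = (x - y) / y" using assms by (simp add: field_simps)
  show "ln x \<le> ln y + (x - y) / y" using ln_le_minus_one[OF xy] e d by simp
  assume ne: "x \<noteq> y"
  have "x / y \<noteq> 1" using ne assms by simp
  then have "ln (x / y) \<noteq> x / y - 1" using ln_eq_minus_one[OF xy] by blast
  then show "ln x < ln y + (x - y) / y" using ln_le_minus_one[OF xy] e d by simp
qed

lemma opt_unique:
  fixes p :: "real^'n \<Rightarrow> real" and Al S :: "(real^'n) set" and \<alpha> c :: real
  assumes fin: "finite Al" and SA: "S \<subseteq> Al" and Sne: "S \<noteq> {}"
    and ppos: "\<forall>a\<in>Al. p a > 0" and a0: "0 \<le> \<alpha>" and a1: "\<alpha> < 1"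
    and cdef: "c = (1 - \<alpha> + \<alpha> * sum p S) / card S"
    and inS: "\<forall>a\<in>S. \<alpha> * p a < c" and outS: "\<forall>a\<in>Al - S. c \<le> \<alpha> * p a"
    and qdef: "qst = (\<lambda>a. if a \<in> S then (c - \<alpha> * p a) / (1 - \<alpha>) else 0)"
  shows "qst \<in> prob_simplex Al"
    and "\<forall>a\<in>S. mix \<alpha> qst p a = c"
    and "\<forall>a\<in>Al - S. mix \<alpha> qst p a = \<alpha> * p a"
    and "0 < c"
    and "\<And>q. q \<in> prob_simplex Al \<Longrightarrow> (\<forall>a\<in>Al. 0 < mix \<alpha> q p a) \<Longrightarrow>
            (\<Sum>a\<in>Al. ln (mix \<alpha> qst p a)) \<le> (\<Sum>a\<in>Al. ln (mix \<alpha> q p a)) \<Longrightarrow> q = qst"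
proof -
  have finS: "finite S" using fin SA finite_subset by blast
  have Mpos: "0 < real (card S)" using finS Sne by (simp add: card_gt_0_iff)
  have P0: "0 \<le> sum p S" using ppos SA by (intro sum_nonneg) (auto intro: less_imp_le)
  show cpos: "0 < c" unfolding cdef using Mpos P0 a0 a1 by (intro divide_pos_pos) (auto intro!: add_pos_nonneg)
  have Mc: "real (card S) * c = 1 - \<alpha> + \<alpha> * sum p S" unfolding cdef using Mpos by simp
  show wS: "\<forall>a\<in>S. mix \<alpha> qst p a = c" unfolding mix_def qdef using a1 by auto
  show wO: "\<forall>a\<in>Al - S. mix \<alpha> qst p a = \<alpha> * p a" unfolding mix_def qdef by auto
  have qnn: "\<forall>a. 0 \<le> qst a" unfolding qdef using inS a1 by auto
  have q0: "\<forall>a. a \<notin> Al \<longrightarrow> qst a = 0" unfolding qdef using SA by auto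
  have "sum qst Al = sum qst S"
    using SA fin by (intro sum.mono_neutral_right) (auto simp: qdef)
  also have "\<dots> = (\<Sum>a\<in>S. (c - \<alpha> * p a) / (1 - \<alpha>))" by (rule sum.cong) (auto simp: qdef)
  also have "\<dots> = (real (card S) * c - \<alpha> * sum p S) / (1 - \<alpha>)"
    by (simp add: sum_divide_distrib[symmetric] sum_subtractf sum_distrib_left)
  also have "\<dots> = 1" using Mc a1 by simp
  finally have qsum: "sum qst Al = 1" .
  show qsimp: "qst \<in> prob_simplex Al" unfolding prob_simplex_def using qnn q0 qsum by auto
  have wpos: "\<forall>a\<in>Al. 0 < mix \<alpha> qst p a"
  proof
    fix a assume "a \<in> Al"
    then show "0 < mix \<alpha> qst p a" using wS wO cpos outS by (cases "a \<in> S") force+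
  qed
  fix q assume qs: "q \<in> prob_simplex Al" and qpos: "\<forall>a\<in>Al. 0 < mix \<alpha> q p a"
    and le: "(\<Sum>a\<in>Al. ln (mix \<alpha> qst p a)) \<le> (\<Sum>a\<in>Al. ln (mix \<alpha> q p a))"
  show "q = qst"
  proof (rule ccontr)
    assume ne: "q \<noteq> qst"
    then obtain a0 where "q a0 \<noteq> qst a0" by auto
    moreover have "a0 \<in> Al" using calculation qs q0 unfolding prob_simplex_def by (metis (mono_tags, lifting) mem_Collect_eq)
    ultimately have a0: "a0 \<in> Al" "mix \<alpha> q p a0 \<noteq> mix \<alpha> qst p a0" using a1 by (auto simp: mix_def)
    let ?w = "mix \<alpha> q p" and ?v = "mix \<alpha> qst p"
    have "(\<Sum>a\<in>Al. ln (?w a)) < (\<Sum>a\<in>Al. ln (?v a) + (?w a - ?v a) / ?v a)"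
    proof (rule sum_strict_mono_ex1[OF fin])
      show "\<forall>x\<in>Al. ln (?w x) \<le> ln (?v x) + (?w x - ?v x) / ?v x"
        using ln_tangent(1) qpos wpos by blast
      show "\<exists>a\<in>Al. ln (?w a) < ln (?v a) + (?w a - ?v a) / ?v a"
        using ln_tangent(2) qpos wpos a0 by blast
    qed
    also have "\<dots> = (\<Sum>a\<in>Al. ln (?v a)) + (\<Sum>a\<in>Al. (?w a - ?v a) / ?v a)" by (simp add: sum.distrib)
    also have "(\<Sum>a\<in>Al. (?w a - ?v a) / ?v a) \<le> (\<Sum>a\<in>Al. (?w a - ?v a) / c)"
    proof (rule sum_mono)
      fix a assume aA: "a \<in> Al"
      show "(?w a - ?v a) / ?v a \<le> (?w a - ?v a) / c"
      proof (cases "a \<in> S")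
        case True then show ?thesis using wS by simp
      next
        case False
        have "?w a - ?v a = (1 - \<alpha>) * q a" using False unfolding mix_def qdef by simp
        moreover have "0 \<le> q a" using qs unfolding prob_simplex_def by auto
        ultimately have nn: "0 \<le> ?w a - ?v a" using a1 by simp
        have "c \<le> ?v a" using False aA wO outS by auto
        then show ?thesis using nn cpos by (intro divide_left_mono) auto
      qed
    qed
    also have "(\<Sum>a\<in>Al. (?w a - ?v a) / c) = (1 - \<alpha>) * (sum q Al - sum qst Al) / c"
    proof -
      have "\<And>a. ?w a - ?v a = (1 - \<alpha>) * (q a - qst a)" by (simp add: mix_def algebra_simps)
      then have "(\<Sum>a\<in>Al. (?w a - ?v a) / c) = (\<Sum>a\<in>Al. (1 - \<alpha>) * (q a - qst a)) / c"
        by (simp add: sum_divide_distrib)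
      also have "\<dots> = (1 - \<alpha>) * (sum q Al - sum qst Al) / c"
        by (simp add: sum_distrib_left[symmetric] sum_subtractf)
      finally show ?thesis .
    qed
    also have "\<dots> = 0" using qs qsum unfolding prob_simplex_def by simp
    finally show False using le by simp
  qed
qed


lemma prod_Al:
  assumes "Al \<subseteq> std_basis"
  shows "(\<Prod>i\<in>UNIV. if axis i 1 \<in> Al then f (axis i 1) else 1) = prod f Al"
proof -
  define K where "K = {k. axis k (1::real) \<in> Al}"
  have BK: "Al = (\<lambda>k. axis k 1) ` K" using assms unfolding K_def std_basis_def by auto
  have inj: "inj_on (\<lambda>k. axis k (1::real)) K" by (auto simp: inj_on_def axis_eq_axis)
  have "(\<Prod>i\<in>UNIV. if axis i 1 \<in> Al then f (axis i 1) else 1) = (\<Prod>i\<in>K. f (axis i 1))"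
    unfolding K_def by (simp add: prod.If_cases Int_def)
  also have "\<dots> = prod f Al" unfolding BK by (simp add: prod.reindex[OF inj])
  finally show ?thesis .
qed

lemma logdet_eq:
  assumes "Al \<subseteq> std_basis"
  shows "logdet_on Al (design_matrix std_basis f) = (if prod f Al > 0 then ereal (ln (prod f Al)) else -\<infinity>)"
  unfolding logdet_on_def compress_diagm[OF assms] det_diagm prod_Al[OF assms] ..

lemma g_eq:
  assumes "Al \<subseteq> std_basis" and nz: "\<forall>a\<in>Al. f a \<noteq> 0"
  shows "g_on Al (design_matrix std_basis f) = Max ((\<lambda>a. inverse (f a)) ` Al)"
proof -
  let ?D = "\<lambda>i. if axis i 1 \<in> Al then f (axis i 1) else 1"
  have D: "\<And>i. ?D i \<noteq> 0" using nz by auto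
  have "\<And>a. a \<in> Al \<Longrightarrow> a \<bullet> (diagm (\<lambda>i. inverse (?D i)) *v a) = inverse (f a)"
  proof -
    fix a assume aA: "a \<in> Al"
    then obtain k where k: "a = axis k 1" using assms unfolding std_basis_def by auto
    show "a \<bullet> (diagm (\<lambda>i. inverse (?D i)) *v a) = inverse (f a)"
      using aA unfolding k diagm_mulv inner_axis' by simp
  qed
  then show ?thesis
    unfolding g_on_def compress_diagm[OF assms(1)] matrix_inv_diagm[OF D]
    by (metis (no_types, lifting) image_cong)
qed

theorem proposition4p7:
  fixes p :: "real^'n \<Rightarrow> real" and Al :: "(real^'n) set" and \<alpha> :: real
  assumes "p \<in> prob_simplex std_basis"
    and "Al \<subseteq> std_basis" and "Al \<noteq> {}"
    and "\<forall>a\<in>Al. p a > 0"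
    and "0 \<le> \<alpha>" and "\<alpha> < 1"
  shows "\<exists>i\<in>{1..nvals p Al}.
           beta p Al (i + 1) \<le> \<alpha> \<and> \<alpha> < beta p Al i \<and>
           (\<forall>qs. qs \<in> prob_simplex Al \<and>
                 (\<forall>q\<in>prob_simplex Al. logdet_on Al (design_matrix std_basis (mix \<alpha> q p))
                                  \<le> logdet_on Al (design_matrix std_basis (mix \<alpha> qs p)))
              \<longrightarrow>
              g_on Al (design_matrix std_basis (mix \<alpha> qs p)) =
                (\<Sum>j=1..i. real (mult p Al j)) /
                (\<alpha> * (\<Sum>j=1..i. real (mult p Al j) * ord_val p Al j) + 1 - \<alpha>) \<and>
              {a. qs a \<noteq> 0} = {a\<in>Al. p a \<le> ord_val p Al i} \<and>
              (\<forall>a\<in>{a\<in>Al. p a \<le> ord_val p Al i}.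
                 qs a = 1 / real (card {a\<in>Al. p a \<le> ord_val p Al i})
                   + \<alpha> / (1 - \<alpha>) *
                     (sum p {a\<in>Al. p a \<le> ord_val p Al i} / real (card {a\<in>Al. p a \<le> ord_val p Al i})
                      - p a)))"
proof -
  note AlB = assms(2) and ppos = assms(4) and a0 = assms(5) and a1 = assms(6)
  have fin: "finite Al"
    using AlB unfolding std_basis_def by (rule finite_subset) simp
  define r where "r = nvals p Al"
  have r1: "1 \<le> r" unfolding r_def nvals_def using fin assms(3)
    by (simp add: Suc_le_eq card_gt_0_iff)
  define I where "I = {i\<in>{1..r}. \<alpha> < beta p Al i}"
  have "1 \<in> I" unfolding I_def using r1 a1 by (simp add: beta_def)
  have finI: "finite I" unfolding I_def by simp
  define i where "i = Max I"
  have iI: "i \<in> I" unfolding i_def using finI \<open>1 \<in> I\<close> by (intro Max_in) auto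
  then have i1: "1 \<le> i" and ir: "i \<le> r" and ai: "\<alpha> < beta p Al i" unfolding I_def by auto
  have bi: "beta p Al (i + 1) \<le> \<alpha>"
  proof (cases "i < r")
    case True
    have "i + 1 \<notin> I"
    proof
      assume "i + 1 \<in> I"
      then have "i + 1 \<le> i" unfolding i_def using finI by (simp add: Max_ge)
      then show False by simp
    qed
    then show ?thesis using True unfolding I_def by auto
  next
    case False
    then have "i = r" using ir by simp
    then show ?thesis using a0 r1 unfolding beta_def r_def by auto
  qed
  define S where "S = {a\<in>Al. p a \<le> ord_val p Al i}"
  define M where "M = real (card S)"
  define P where "P = sum p S"
  define c where "c = (1 - \<alpha> + \<alpha> * P) / M"
  have irr: "i \<le> nvals p Al" using ir r_def by simp
  have Mm: "M = (\<Sum>j=1..i. real (mult p Al j))"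
    unfolding M_def S_def S_card_sum(1)[OF fin i1 irr] by simp
  have Pm: "P = (\<Sum>j=1..i. real (mult p Al j) * ord_val p Al j)"
    unfolding P_def S_def using S_card_sum(2)[OF fin i1 irr] .
  have lin: "\<And>x. (\<Sum>j=1..i. real (mult p Al j) * (x - ord_val p Al j)) = M * x - P"
    unfolding Mm Pm by (simp add: right_diff_distrib sum_subtractf sum_distrib_right)
  have SA: "S \<subseteq> Al" unfolding S_def by auto
  have Sne: "S \<noteq> {}"
  proof -
    obtain a where "a \<in> Al" "p a = ord_val p Al i" using ov_in[OF fin i1 irr] by auto
    then show ?thesis unfolding S_def by auto
  qed
  have Mpos: "0 < M" unfolding M_def using Sne SA fin
    by (simp add: card_gt_0_iff finite_subset)
  have inS: "\<forall>a\<in>S. \<alpha> * p a < c"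
  proof
    fix a assume aS: "a \<in> S"
    have "\<alpha> * (1 + (M * ord_val p Al i - P)) < 1"
      using beta_lt[OF i1 irr a0 ai] lin by simp
    then have "\<alpha> * ord_val p Al i * M < 1 - \<alpha> + \<alpha> * P" by (simp add: algebra_simps)
    then have "\<alpha> * ord_val p Al i < c" unfolding c_def using Mpos by (simp add: field_simps)
    moreover have "\<alpha> * p a \<le> \<alpha> * ord_val p Al i" using aS a0 unfolding S_def by (auto intro: mult_left_mono)
    ultimately show "\<alpha> * p a < c" by simp
  qed
  have outS: "\<forall>a\<in>Al - S. c \<le> \<alpha> * p a"
  proof
    fix a assume aA: "a \<in> Al - S"
    obtain k where k: "k \<in> {1..nvals p Al}" "p a = ord_val p Al k" using val_idx[OF fin] aA by blast
    have "i < k"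
    proof (rule ccontr)
      assume "\<not> i < k"
      then have "ord_val p Al k \<le> ord_val p Al i" using ov_le[of k i p Al] k irr by auto
      then show False using aA k unfolding S_def by auto
    qed
    then have ir': "i < nvals p Al" using k by auto
    have le: "ord_val p Al (i + 1) \<le> p a" using ov_le[of "i + 1" k p Al] k \<open>i < k\<close> by auto
    have "1 \<le> \<alpha> * (1 + (M * ord_val p Al (i + 1) - P))"
      using beta_ge[OF i1 ir' bi] lin by simp
    then have "1 - \<alpha> + \<alpha> * P \<le> \<alpha> * ord_val p Al (i + 1) * M" by (simp add: algebra_simps)
    then have "c \<le> \<alpha> * ord_val p Al (i + 1)" unfolding c_def using Mpos by (simp add: field_simps)
    also have "\<dots> \<le> \<alpha> * p a" using le a0 by (intro mult_left_mono)
    finally show "c \<le> \<alpha> * p a" .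
  qed
  define qst where "qst = (\<lambda>a. if a \<in> S then (c - \<alpha> * p a) / (1 - \<alpha>) else 0)"
  have cdef: "c = (1 - \<alpha> + \<alpha> * sum p S) / card S" unfolding c_def P_def M_def ..
  note OU = opt_unique[OF fin SA Sne ppos a0 a1 cdef inS outS qst_def]
  have wpos: "\<forall>a\<in>Al. 0 < mix \<alpha> qst p a"
  proof
    fix a assume "a \<in> Al"
    then show "0 < mix \<alpha> qst p a" using OU(2,3,4) outS by (cases "a \<in> S") force+
  qed
  have prodpos: "0 < prod (mix \<alpha> qst p) Al" using wpos by (intro prod_pos) auto
  show ?thesis
  proof (intro bexI conjI allI impI)
    show "beta p Al (i + 1) \<le> \<alpha>" by (rule bi)
    show "\<alpha> < beta p Al i" by (rule ai)
    show "i \<in> {1..nvals p Al}" using i1 irr by simp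
    fix qs
    assume H: "qs \<in> prob_simplex Al \<and>
                 (\<forall>q\<in>prob_simplex Al. logdet_on Al (design_matrix std_basis (mix \<alpha> q p))
                                  \<le> logdet_on Al (design_matrix std_basis (mix \<alpha> qs p)))"
    then have qsP: "qs \<in> prob_simplex Al" by simp
    have L: "logdet_on Al (design_matrix std_basis (mix \<alpha> qst p))
               \<le> logdet_on Al (design_matrix std_basis (mix \<alpha> qs p))" using H OU(1) by blast
    then have L2: "ereal (ln (prod (mix \<alpha> qst p) Al)) \<le>
        (if prod (mix \<alpha> qs p) Al > 0 then ereal (ln (prod (mix \<alpha> qs p) Al)) else -\<infinity>)"
      unfolding logdet_eq[OF AlB] using prodpos by simp
    then have pq: "prod (mix \<alpha> qs p) Al > 0" by (cases "prod (mix \<alpha> qs p) Al > 0") auto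
    with L2 have lnle: "ln (prod (mix \<alpha> qst p) Al) \<le> ln (prod (mix \<alpha> qs p) Al)" by simp
    have nn: "\<forall>a\<in>Al. 0 \<le> mix \<alpha> qs p a"
    proof
      fix a assume aA: "a \<in> Al"
      have "0 \<le> qs a" using qsP unfolding prob_simplex_def by auto
      moreover have "0 \<le> p a" using ppos aA by (simp add: less_imp_le)
      ultimately show "0 \<le> mix \<alpha> qs p a" unfolding mix_def using a0 a1 by simp
    qed
    have qpos: "\<forall>a\<in>Al. 0 < mix \<alpha> qs p a"
    proof
      fix a assume aA: "a \<in> Al"
      have "mix \<alpha> qs p a \<noteq> 0"
      proof
        assume "mix \<alpha> qs p a = 0"
        then have "prod (mix \<alpha> qs p) Al = 0" using aA fin by (intro prod_zero) auto
        then show False using pq by simp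
      qed
      then show "0 < mix \<alpha> qs p a" using nn aA by force
    qed
    have "(\<Sum>a\<in>Al. ln (mix \<alpha> qst p a)) \<le> (\<Sum>a\<in>Al. ln (mix \<alpha> qs p a))"
      using lnle ln_prod[OF fin, of "mix \<alpha> qst p"] ln_prod[OF fin, of "mix \<alpha> qs p"] wpos qpos
      by (metis less_irrefl)
    then have qeq: "qs = qst" using OU(5)[OF qsP qpos] by simp
    have cpos: "0 < c" by (rule OU(4))
    have gmax: "Max ((\<lambda>a. inverse (mix \<alpha> qst p a)) ` Al) = inverse c"
    proof (rule Max_eqI)
      show "finite ((\<lambda>a. inverse (mix \<alpha> qst p a)) ` Al)" using fin by simp
      obtain a where "a \<in> S" using Sne by auto
      then show "inverse c \<in> (\<lambda>a. inverse (mix \<alpha> qst p a)) ` Al" using OU(2) SA by force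
      fix y assume "y \<in> (\<lambda>a. inverse (mix \<alpha> qst p a)) ` Al"
      then obtain a where a: "a \<in> Al" "y = inverse (mix \<alpha> qst p a)" by auto
      show "y \<le> inverse c"
      proof (cases "a \<in> S")
        case True then show ?thesis using a OU(2) by simp
      next
        case False
        then have "c \<le> mix \<alpha> qst p a" using a OU(3) outS by auto
        then show ?thesis using a cpos by (simp add: le_imp_inverse_le)
      qed
    qed
    have "g_on Al (design_matrix std_basis (mix \<alpha> qs p)) = inverse c"
      unfolding qeq g_eq[OF AlB] using wpos gmax by (simp add: g_eq[OF AlB] less_imp_neq[symmetric]) 
    also have "\<dots> = M / (\<alpha> * P + 1 - \<alpha>)" unfolding c_def by (simp add: algebra_simps)
    finally show "g_on Al (design_matrix std_basis (mix \<alpha> qs p)) =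
                (\<Sum>j=1..i. real (mult p Al j)) /
                (\<alpha> * (\<Sum>j=1..i. real (mult p Al j) * ord_val p Al j) + 1 - \<alpha>)"
      unfolding Mm Pm .
    show "{a. qs a \<noteq> 0} = {a\<in>Al. p a \<le> ord_val p Al i}"
      unfolding qeq S_def[symmetric] using inS a1 by (auto simp: qst_def)
    show "\<forall>a\<in>{a\<in>Al. p a \<le> ord_val p Al i}.
                 qs a = 1 / real (card {a\<in>Al. p a \<le> ord_val p Al i})
                   + \<alpha> / (1 - \<alpha>) *
                     (sum p {a\<in>Al. p a \<le> ord_val p Al i} / real (card {a\<in>Al. p a \<le> ord_val p Al i})
                      - p a)"
    proof
      fix a assume "a \<in> {a\<in>Al. p a \<le> ord_val p Al i}"
      then have aS: "a \<in> S" unfolding S_def .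
      have "qs a = (c - \<alpha> * p a) / (1 - \<alpha>)" using aS unfolding qeq qst_def by simp
      also have "\<dots> = 1 / M + \<alpha> / (1 - \<alpha>) * (P / M - p a)"
        unfolding c_def using Mpos a1 by (simp add: field_simps)
      finally show "qs a = 1 / real (card {a\<in>Al. p a \<le> ord_val p Al i})
                   + \<alpha> / (1 - \<alpha>) *
                     (sum p {a\<in>Al. p a \<le> ord_val p Al i} / real (card {a\<in>Al. p a \<le> ord_val p Al i})
                      - p a)" unfolding M_def P_def S_def .
    qed
  qed
qed

end
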